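(* Let $C$ be an $[n,k,d]$ and $C'$ an $[n',k',d']$ linear code over $\mathbb{F}_q$, let $x \in C \times C'$, $e \in \mathbb{F}_q^{n \times n'}$ and $y = x + e$. Perform the column decoding of $y$ described in the context, obtaining $\hat{x}$, the reliability weights $\alpha_1,\dots,\alpha_{n'}$ and the set $I_E$. Suppose that $$2\sum_{j=1}^{n'} \min\{ w(e_j), d\} < d\, d'$$ (in particular this holds whenever $2w(e) < d d'$). Then $$\sum_{j \in [n'] \setminus I_E} \alpha_j \;-\; \sum_{j \in I_E} \alpha_j \;>\; n' - d',$$ and consequently, for every row index $i \in [n]$, $$\sum_{j=1}^{n'} \alpha_j \,(-1)^{w(\hat{x}_{ij} - x_{ij})} \;>\; n' - d',$$ where $w(\hat{x}_{ij} - x_{ij})$ is $0$ if $\hat{x}_{ij} = x_{ij}$ and $1$ otherwise.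
   Context: The product code $C \times C'$ consists of the matrices $G^T X G'$ for $X \in \mathbb{F}_q^{k\times k'}$, where $G, G'$ are generator matrices of $C, C'$; equivalently its elements are the $n \times n'$ matrices all of whose columns lie in $C$ and all of whose rows lie in $C'$. For a matrix $b$, $b_j$ denotes its $j$-th column and $b^i$ its $i$-th row; $w(\cdot)$ is Hamming weight. Let $t = \lfloor (d-1)/2 \rfloor$. Column decoding: each column $y_j$ ($j \in [n']$) is decoded by a bounded-distance decoder for $C$, which returns the unique codeword of $C$ at Hamming distance at most $t$ from $y_j$ if one exists, and otherwise declares failure. If decoding succeeds with output $\hat{x}_j$, set $\hat{e}_j = y_j - \hat{x}_j$ and $\alpha_j = (d - 2 w(\hat{e}_j))/d$; if it fails, set $\hat{x}_j = y_j$ and $\alpha_j = 0$. Let $\hat{x}$ be the matrix with columns $\hat{x}_j$. Let $I_E \subseteq [n']$ be the set of indices $j$ for which column decoding failed or $\hat{x}_j \neq x_j$. *)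

theory Defs
  imports Complex_Main "HOL-Library.Function_Algebras"
begin

text \<open>Vectors of length n over a field are functions nat => 'a vanishing outside {0..<n};
  n x n' matrices are functions nat => nat => 'a vanishing outside {0..<n} x {0..<n'}.\<close>

definition vecs :: "nat \<Rightarrow> (nat \<Rightarrow> 'a::zero) set" where
  "vecs n = {v. \<forall>i. n \<le> i \<longrightarrow> v i = 0}"

definition mats :: "nat \<Rightarrow> nat \<Rightarrow> (nat \<Rightarrow> nat \<Rightarrow> 'a::zero) set" where
  "mats n n' = {b. \<forall>i j. (n \<le> i \<or> n' \<le> j) \<longrightarrow> b i j = 0}"

definition hw :: "nat \<Rightarrow> (nat \<Rightarrow> 'a::zero) \<Rightarrow> nat" where
  "hw n v = card {i. i < n \<and> v i \<noteq> 0}"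

definition vscale :: "'a::field \<Rightarrow> (nat \<Rightarrow> 'a) \<Rightarrow> (nat \<Rightarrow> 'a)" where
  "vscale c v = (\<lambda>i. c * v i)"

definition lin_code :: "nat \<Rightarrow> nat \<Rightarrow> nat \<Rightarrow> (nat \<Rightarrow> 'a::field) set \<Rightarrow> bool" where
  "lin_code n k d C \<longleftrightarrow>
     C \<subseteq> vecs n \<and> 0 \<in> C \<and>
     (\<forall>u\<in>C. \<forall>v\<in>C. u + v \<in> C) \<and>
     (\<forall>c. \<forall>v\<in>C. vscale c v \<in> C) \<and>
     vector_space.dim vscale C = k \<and>
     (\<exists>v\<in>C. v \<noteq> 0 \<and> hw n v = d) \<and>
     (\<forall>v\<in>C. v \<noteq> 0 \<longrightarrow> d \<le> hw n v)"

definition col :: "(nat \<Rightarrow> nat \<Rightarrow> 'a) \<Rightarrow> nat \<Rightarrow> (nat \<Rightarrow> 'a)" where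
  "col b j = (\<lambda>i. b i j)"

definition row :: "(nat \<Rightarrow> nat \<Rightarrow> 'a) \<Rightarrow> nat \<Rightarrow> (nat \<Rightarrow> 'a)" where
  "row b i = (\<lambda>j. b i j)"

definition product_code :: "nat \<Rightarrow> nat \<Rightarrow> (nat \<Rightarrow> 'a::zero) set \<Rightarrow> (nat \<Rightarrow> 'a) set
    \<Rightarrow> (nat \<Rightarrow> nat \<Rightarrow> 'a) set" where
  "product_code n n' C C' =
     {b \<in> mats n n'. (\<forall>j<n'. col b j \<in> C) \<and> (\<forall>i<n. row b i \<in> C')}"

definition bd_decode :: "nat \<Rightarrow> nat \<Rightarrow> (nat \<Rightarrow> 'a::ab_group_add) set \<Rightarrow> (nat \<Rightarrow> 'a)
    \<Rightarrow> (nat \<Rightarrow> 'a) option" where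
  "bd_decode n d C y =
     (if \<exists>!c. c \<in> C \<and> hw n (y - c) \<le> (d - 1) div 2
      then Some (THE c. c \<in> C \<and> hw n (y - c) \<le> (d - 1) div 2)
      else None)"

definition xhat :: "nat \<Rightarrow> nat \<Rightarrow> (nat \<Rightarrow> 'a::ab_group_add) set \<Rightarrow> (nat \<Rightarrow> nat \<Rightarrow> 'a)
    \<Rightarrow> (nat \<Rightarrow> nat \<Rightarrow> 'a)" where
  "xhat n d C y = (\<lambda>i j. case bd_decode n d C (col y j) of
       Some c \<Rightarrow> c i | None \<Rightarrow> y i j)"

definition alpha :: "nat \<Rightarrow> nat \<Rightarrow> (nat \<Rightarrow> 'a::ab_group_add) set \<Rightarrow> (nat \<Rightarrow> nat \<Rightarrow> 'a)
    \<Rightarrow> nat \<Rightarrow> real" where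
  "alpha n d C y j = (case bd_decode n d C (col y j) of
       Some c \<Rightarrow> (real d - 2 * real (hw n (col y j - c))) / real d
     | None \<Rightarrow> 0)"

definition IE :: "nat \<Rightarrow> nat \<Rightarrow> nat \<Rightarrow> (nat \<Rightarrow> 'a::ab_group_add) set \<Rightarrow> (nat \<Rightarrow> nat \<Rightarrow> 'a)
    \<Rightarrow> (nat \<Rightarrow> nat \<Rightarrow> 'a) \<Rightarrow> nat set" where
  "IE n n' d C x y = {j. j < n' \<and>
     (bd_decode n d C (col y j) = None \<or> col (xhat n d C y) j \<noteq> col x j)}"

end

theory Submission
  imports Defs
begin

lemma hw_diff: "hw n (u - v) \<le> hw n u + hw n (v::nat\<Rightarrow>'a::ab_group_add)"
proof -
  have "{i. i < n \<and> (u - v) i \<noteq> 0} \<subseteq> {i. i < n \<and> u i \<noteq> 0} \<union> {i. i < n \<and> v i \<noteq> 0}"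
    by auto
  hence "card {i. i < n \<and> (u - v) i \<noteq> 0} \<le> card ({i. i < n \<and> u i \<noteq> 0} \<union> {i. i < n \<and> v i \<noteq> 0})"
    by (intro card_mono) auto
  also have "\<dots> \<le> card {i. i < n \<and> u i \<noteq> 0} + card {i. i < n \<and> v i \<noteq> 0}"
    by (rule card_Un_le)
  finally show ?thesis unfolding hw_def .
qed

lemma code_sub:
  assumes "lin_code n k d C" "a \<in> C" "b \<in> C"
  shows "a - b \<in> (C :: (nat \<Rightarrow> 'a::field) set)"
proof -
  have "vscale (-1) b \<in> C" using assms unfolding lin_code_def by blast
  hence "a + vscale (-1) b \<in> C" using assms unfolding lin_code_def by blast
  moreover have "a + vscale (-1) b = a - b" by (auto simp: vscale_def fun_eq_iff)
  ultimately show ?thesis by simp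
qed

lemma code_dist:
  assumes "lin_code n k d C" "a \<in> C" "b \<in> C" "a \<noteq> b"
  shows "d \<le> hw n (a - b :: nat \<Rightarrow> 'a::field)"
proof -
  have "a - b \<in> C" using code_sub assms by blast
  moreover have "a - b \<noteq> 0" using assms by simp
  ultimately show ?thesis using assms(1) unfolding lin_code_def by blast
qed

lemma d_pos:
  assumes "lin_code n k d (C :: (nat \<Rightarrow> 'a::field) set)"
  shows "0 < d"
proof -
  obtain v where v: "v \<in> C" "v \<noteq> 0" "hw n v = d" using assms unfolding lin_code_def by blast
  have "v \<in> vecs n" using assms v unfolding lin_code_def by blast
  obtain i where i: "v i \<noteq> 0" using v by (auto simp: fun_eq_iff)
  have "i < n" using i \<open>v \<in> vecs n\<close> unfolding vecs_def using not_le by auto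
  hence "{i. i < n \<and> v i \<noteq> 0} \<noteq> {}" using i by blast
  moreover have "finite {i. i < n \<and> v i \<noteq> 0}" by simp
  ultimately have "0 < card {i. i < n \<and> v i \<noteq> 0}" by (simp only: card_gt_0_iff) simp
  thus ?thesis using v unfolding hw_def by simp
qed

lemma decode_some:
  assumes "bd_decode n d C y = Some c"
  shows "c \<in> C \<and> hw n (y - c) \<le> (d - 1) div 2"
proof -
  have ex: "\<exists>!c. c \<in> C \<and> hw n (y - c) \<le> (d - 1) div 2"
    using assms unfolding bd_decode_def by (auto split: if_splits)
  hence "c = (THE c. c \<in> C \<and> hw n (y - c) \<le> (d - 1) div 2)"
    using assms unfolding bd_decode_def by auto
  thus ?thesis using theI'[OF ex] by simp
qed

lemma decode_close:
  assumes "lin_code n k d C" "x \<in> C" "hw n (y - x) \<le> (d - 1) div 2"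
  shows "bd_decode n d C y = Some (x :: nat \<Rightarrow> 'a::field)"
proof -
  have d0: "0 < d" using d_pos[OF assms(1)] .
  have uniq: "c = x" if "c \<in> C" "hw n (y - c) \<le> (d - 1) div 2" for c
  proof (rule ccontr)
    assume "c \<noteq> x"
    hence d1: "d \<le> hw n (c - x)" using code_dist[OF assms(1) that(1) assms(2)] by simp
    have eq: "c - x = (y - x) - (y - c)" by simp
    have d2: "d \<le> hw n (y - x) + hw n (y - c)"
      using d1 hw_diff[of n "y - x" "y - c"] unfolding eq by (rule order_trans)
    have "2 * ((d - 1) div 2) < d" using d0 by presburger
    hence "hw n (y - x) + hw n (y - c) < d" using assms(3) that(2) by linarith
    thus False using d2 by linarith
  qed
  have P: "x \<in> C \<and> hw n (y - x) \<le> (d - 1) div 2" using assms(2,3) by (rule conjI)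
  have U: "\<And>c. c \<in> C \<and> hw n (y - c) \<le> (d - 1) div 2 \<Longrightarrow> c = x"
    using uniq by (elim conjE)
  have ex: "\<exists>!c. c \<in> C \<and> hw n (y - c) \<le> (d - 1) div 2"
    using P U by (rule ex1I)
  have "(THE c. c \<in> C \<and> hw n (y - c) \<le> (d - 1) div 2) = x"
    using P U by (rule the_equality)
  thus ?thesis using ex unfolding bd_decode_def by (simp only: if_True)
qed

lemma column_bound:
  assumes lc: "lin_code n k d C"
    and xj: "col x j \<in> C" and j: "j < n'"
  shows "(if j \<in> IE n n' d C x (x + e) then - alpha n d C (x + e) j else alpha n d C (x + e) j)
           \<ge> 1 - 2 * real (min (hw n (col e j)) d) / real d
       \<and> alpha n d C (x + e) j \<ge> 0
       \<and> (j \<notin> IE n n' d C x (x + e) \<longrightarrow> (\<forall>i. xhat n d C (x + e) i j = x i j))"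
    (is "?A \<and> ?B \<and> ?C")
proof -
  have d0: "0 < d" using d_pos lc by blast
  define t where "t = (d - 1) div 2"
  have colsum: "col (x + e) j = col x j + col e j" by (simp add: col_def fun_eq_iff)
  hence ye: "col (x + e) j - col x j = col e j" by simp
  show ?thesis
  proof (cases "bd_decode n d C (col (x + e) j)")
    case None
    hence inIE: "j \<in> IE n n' d C x (x + e)" using j unfolding IE_def by simp
    have al: "alpha n d C (x + e) j = 0" using None unfolding alpha_def by simp
    have "\<not> hw n (col e j) \<le> t"
      using decode_close[OF lc xj, of "col (x+e) j"] None ye unfolding t_def by auto
    hence "d \<le> 2 * min (hw n (col e j)) d" unfolding t_def using d0 by auto
    hence "real d \<le> 2 * real (min (hw n (col e j)) d)" by linarith
    hence "2 * real (min (hw n (col e j)) d) / real d \<ge> 1" using d0 by (simp add: field_simps)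
    thus ?thesis using inIE al by simp
  next
    case (Some c)
    have cC: "c \<in> C" and ct: "hw n (col (x + e) j - c) \<le> t" using decode_some[OF Some] t_def by auto
    define w' where "w' = hw n (col (x + e) j - c)"
    have al: "alpha n d C (x + e) j = (real d - 2 * real w') / real d"
      using Some unfolding alpha_def w'_def by simp
    have "2 * w' \<le> d" using ct w'_def t_def by linarith
    hence alpos: "alpha n d C (x + e) j \<ge> 0" using al d0 by simp
    have colx: "col (xhat n d C (x + e)) j = c" using Some by (simp add: xhat_def col_def fun_eq_iff)
    show ?thesis
    proof (cases "c = col x j")
      case True
      hence nIE: "j \<notin> IE n n' d C x (x + e)" using Some colx unfolding IE_def by simp
      have w: "w' = hw n (col e j)" using ye True w'_def by simp
      hence "min (hw n (col e j)) d = w'" using \<open>2 * w' \<le> d\<close> by simp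
      moreover have "\<forall>i. xhat n d C (x + e) i j = x i j"
        using colx True by (metis col_def)
      ultimately show ?thesis using nIE al alpos d0 by (simp add: diff_divide_distrib)
    next
      case False
      hence inIE: "j \<in> IE n n' d C x (x + e)" using colx j unfolding IE_def by simp
      have "d \<le> hw n (c - col x j)" using code_dist[OF lc cC xj False] .
      moreover have "c - col x j = col e j - (col (x + e) j - c)" using ye by (simp add: algebra_simps)
      ultimately have "d \<le> hw n (col e j) + w'" using hw_diff[of n "col e j" "col (x + e) j - c"] w'_def by (metis order_trans)
      hence "d - w' \<le> min (hw n (col e j)) d" by simp
      hence "real d - real w' \<le> real (min (hw n (col e j)) d)" by linarith
      hence "- ((real d - 2 * real w') / real d) \<ge> 1 - 2 * real (min (hw n (col e j)) d) / real d"
      proof -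
        have dd: "real d > 0" using d0 by simp
        have e1: "1 - 2 * real (min (hw n (col e j)) d) / real d = (real d - 2 * real (min (hw n (col e j)) d)) / real d"
          using dd by (simp add: diff_divide_distrib)
        have e2: "- ((real d - 2 * real w') / real d) = (2 * real w' - real d) / real d"
          by (simp add: minus_divide_left)
        have "real d - 2 * real (min (hw n (col e j)) d) \<le> 2 * real w' - real d"
          using \<open>real d - real w' \<le> real (min (hw n (col e j)) d)\<close> by linarith
        hence "(real d - 2 * real (min (hw n (col e j)) d)) / real d \<le> (2 * real w' - real d) / real d"
          using dd by (simp add: divide_right_mono)
        thus ?thesis unfolding e1 e2 .
      qed
      thus ?thesis using inIE al alpos by simp
    qed
  qed
qed

theorem mainTheorem2:
  fixes C C' :: "(nat \<Rightarrow> 'a::{field,finite}) set"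
    and n k d n' k' d' :: nat
    and x e :: "nat \<Rightarrow> nat \<Rightarrow> 'a"
  assumes "lin_code n k d C"
    and "lin_code n' k' d' C'"
    and "x \<in> product_code n n' C C'"
    and "e \<in> mats n n'"
    and "2 * (\<Sum>j<n'. min (hw n (col e j)) d) < d * d'"
  shows "(\<Sum>j\<in>{..<n'} - IE n n' d C x (x + e). alpha n d C (x + e) j)
           - (\<Sum>j\<in>IE n n' d C x (x + e). alpha n d C (x + e) j) > real n' - real d'
         \<and> (\<forall>i<n. (\<Sum>j<n'. alpha n d C (x + e) j *
                 (-1) ^ (if xhat n d C (x + e) i j = x i j then 0 else 1)) > real n' - real d')"
proof -
  let ?I = "IE n n' d C x (x + e)"
  let ?a = "alpha n d C (x + e)"
  let ?s = "\<lambda>j. if j \<in> ?I then - ?a j else ?a j"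
  let ?m = "\<lambda>j. real (min (hw n (col e j)) d)"
  have d0: "0 < d" using d_pos[OF assms(1)] .
  have xj: "col x j \<in> C" if "j < n'" for j using assms(3) that unfolding product_code_def by blast
  have cb: "?s j \<ge> 1 - 2 * ?m j / real d \<and> ?a j \<ge> 0 \<and>
      (j \<notin> ?I \<longrightarrow> (\<forall>i. xhat n d C (x + e) i j = x i j))" if "j < n'" for j
    using column_bound[OF assms(1) xj[OF that] that] by blast
  have Isub: "?I \<subseteq> {..<n'}" unfolding IE_def by auto
  have split: "(\<Sum>j\<in>{..<n'} - ?I. ?a j) - (\<Sum>j\<in>?I. ?a j) = (\<Sum>j<n'. ?s j)"
  proof -
    have "(\<Sum>j<n'. ?s j) = (\<Sum>j\<in>{..<n'} - ?I. ?s j) + (\<Sum>j\<in>?I. ?s j)"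
      using Isub by (metis (no_types, lifting) finite_lessThan sum.subset_diff)
    also have "(\<Sum>j\<in>{..<n'} - ?I. ?s j) = (\<Sum>j\<in>{..<n'} - ?I. ?a j)" by (rule sum.cong) auto
    also have "(\<Sum>j\<in>?I. ?s j) = (\<Sum>j\<in>?I. - ?a j)" by (rule sum.cong) auto
    finally have "(\<Sum>j<n'. ?s j) = (\<Sum>j\<in>{..<n'} - ?I. ?a j) + (\<Sum>j\<in>?I. - ?a j)" .
    thus ?thesis unfolding sum_negf by linarith
  qed
  have L1: "(\<Sum>j<n'. ?s j) \<ge> (\<Sum>j<n'. 1 - 2 * ?m j / real d)"
    by (rule sum_mono) (use cb in auto)
  have L2: "(\<Sum>j<n'. 1 - 2 * ?m j / real d) = real n' - 2 * (\<Sum>j<n'. ?m j) / real d"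
    by (simp add: sum_subtractf sum_divide_distrib[symmetric] sum_distrib_left)
  have h: "2 * (\<Sum>j<n'. ?m j) < real d * real d'"
  proof -
    have "real (2 * (\<Sum>j<n'. min (hw n (col e j)) d)) < real (d * d')"
      using assms(5) by (simp only: of_nat_less_iff)
    thus ?thesis by (simp only: of_nat_mult of_nat_sum of_nat_numeral)
  qed
  hence "2 * (\<Sum>j<n'. ?m j) / real d < real d'" using d0 by (simp add: field_simps)
  hence main: "(\<Sum>j<n'. ?s j) > real n' - real d'" using L1 L2 by linarith
  have part2: "(\<Sum>j<n'. ?a j * (-1) ^ (if xhat n d C (x + e) i j = x i j then 0 else 1)) > real n' - real d'"
    if "i < n" for i
  proof -
    have "(\<Sum>j<n'. ?s j) \<le> (\<Sum>j<n'. ?a j * (-1) ^ (if xhat n d C (x + e) i j = x i j then 0 else 1))"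
    proof (rule sum_mono)
      fix j assume "j \<in> {..<n'}"
      hence c: "?a j \<ge> 0 \<and> (j \<notin> ?I \<longrightarrow> xhat n d C (x + e) i j = x i j)" using cb by auto
      show "?s j \<le> ?a j * (-1) ^ (if xhat n d C (x + e) i j = x i j then 0 else 1)"
        using c by auto
    qed
    thus ?thesis using main by linarith
  qed
  have p1: "(\<Sum>j\<in>{..<n'} - ?I. ?a j) - (\<Sum>j\<in>?I. ?a j) > real n' - real d'"
    using main split by linarith
  show ?thesis using p1 part2 by blast
qed

end
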